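(* Let $M,N\ge 0$. For every two elements $u<w$ of the poset of shuffles $W_{MN}$ and every $i\ge 0$, there is a bijection between the set of elements of $[u,w]$ of rank $\rho(u)+i$ and the set of elements of $[u,w]$ of rank $\rho(w)-i$.
   Context: Let $\mathcal{A}=\{a_1,\dots,a_M\}$, $\mathcal{X}=\{x_1,\dots,x_N\}$ be disjoint sets. A shuffle word is a word (possibly empty) with distinct letters from $\mathcal{A}\cup\mathcal{X}$ in which the letters of each alphabet appear in increasing order of subscripts. $W_{MN}$ is the set of shuffle words ordered by the reflexive-transitive closure of: $w$ is covered by $w'$ iff $w'$ is obtained from $w$ by deleting a letter of $\mathcal{A}$ or inserting a letter of $\mathcal{X}$. Its rank function is $\rho(w)=(M-\#(\{w\}\cap\mathcal{A}))+\#(\{w\}\cap\mathcal{X})$, where $\{w\}$ is the set of letters of $w$. *)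

theory Defs
  imports Main
begin

(* Letters: Inl i stands for a_i (alphabet A), Inr j stands for x_j (alphabet X). *)
type_synonym letter = "nat + nat"

definition alphA :: "nat \<Rightarrow> letter set" where
  "alphA M = Inl ` {1..M}"

definition alphX :: "nat \<Rightarrow> letter set" where
  "alphX N = Inr ` {1..N}"

definition A_subscripts :: "letter list \<Rightarrow> nat list" where
  "A_subscripts w = map projl (filter isl w)"

definition X_subscripts :: "letter list \<Rightarrow> nat list" where
  "X_subscripts w = map projr (filter (\<lambda>c. \<not> isl c) w)"

definition shuffle_word :: "nat \<Rightarrow> nat \<Rightarrow> letter list \<Rightarrow> bool" where
  "shuffle_word M N w \<longleftrightarrow>
     distinct w \<and> set w \<subseteq> alphA M \<union> alphX N \<and>
     sorted_wrt (<) (A_subscripts w) \<and> sorted_wrt (<) (X_subscripts w)"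

definition W :: "nat \<Rightarrow> nat \<Rightarrow> letter list set" where
  "W M N = {w. shuffle_word M N w}"

definition covered_by :: "nat \<Rightarrow> nat \<Rightarrow> letter list \<Rightarrow> letter list \<Rightarrow> bool" where
  "covered_by M N w w' \<longleftrightarrow> w \<in> W M N \<and> w' \<in> W M N \<and>
     ((\<exists>xs ys c. c \<in> alphA M \<and> w = xs @ [c] @ ys \<and> w' = xs @ ys) \<or>
      (\<exists>xs ys c. c \<in> alphX N \<and> w = xs @ ys \<and> w' = xs @ [c] @ ys))"

definition shuffle_le :: "nat \<Rightarrow> nat \<Rightarrow> letter list \<Rightarrow> letter list \<Rightarrow> bool" where
  "shuffle_le M N u w \<longleftrightarrow> u \<in> W M N \<and> w \<in> W M N \<and> (covered_by M N)\<^sup>*\<^sup>* u w"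

definition shuffle_less :: "nat \<Rightarrow> nat \<Rightarrow> letter list \<Rightarrow> letter list \<Rightarrow> bool" where
  "shuffle_less M N u w \<longleftrightarrow> shuffle_le M N u w \<and> u \<noteq> w"

definition shuffle_interval :: "nat \<Rightarrow> nat \<Rightarrow> letter list \<Rightarrow> letter list \<Rightarrow> letter list set" where
  "shuffle_interval M N u w = {v. shuffle_le M N u v \<and> shuffle_le M N v w}"

definition rho :: "nat \<Rightarrow> nat \<Rightarrow> letter list \<Rightarrow> nat" where
  "rho M N w = (M - card (set w \<inter> alphA M)) + card (set w \<inter> alphX N)"

end

theory Submission
  imports Defs
begin

lemma W_filter: "w \<in> W M N \<Longrightarrow> filter P w \<in> W M N"
proof -
  assume w: "w \<in> W M N"
  have fA: "filter isl (filter P w) = filter P (filter isl w)"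
    by (simp add: filter_filter conj_commute)
  have fX: "filter (\<lambda>c. \<not> isl c) (filter P w) = filter P (filter (\<lambda>c. \<not> isl c) w)"
    by (simp add: filter_filter conj_commute)
  from w have sw: "shuffle_word M N w" unfolding W_def by simp
  have "sorted_wrt (\<lambda>x y. projl x < projl y) (filter P (filter isl w))"
    by (rule sorted_wrt_filter) (use sw in \<open>simp add: shuffle_word_def A_subscripts_def sorted_wrt_map\<close>)
  hence 1: "sorted_wrt (<) (A_subscripts (filter P w))"
    by (simp only: A_subscripts_def fA sorted_wrt_map)
  have "sorted_wrt (\<lambda>x y. projr x < projr y) (filter P (filter (\<lambda>c. \<not> isl c) w))"
    by (rule sorted_wrt_filter) (use sw in \<open>simp add: shuffle_word_def X_subscripts_def sorted_wrt_map\<close>)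
  hence 2: "sorted_wrt (<) (X_subscripts (filter P w))"
    by (simp only: X_subscripts_def fX sorted_wrt_map)
  show ?thesis using sw 1 2 unfolding W_def shuffle_word_def by auto
qed

definition rel :: "letter list \<Rightarrow> letter list \<Rightarrow> bool" where
  "rel u v \<longleftrightarrow> (\<forall>c\<in>set v. isl c \<longrightarrow> c \<in> set u) \<and> (\<forall>c\<in>set u. \<not> isl c \<longrightarrow> c \<in> set v)
     \<and> filter (\<lambda>c. c \<in> set v) u = filter (\<lambda>c. c \<in> set u) v"

lemma relA: "rel u v \<Longrightarrow> c \<in> set v \<Longrightarrow> isl c \<Longrightarrow> c \<in> set u"
  unfolding rel_def by blast
lemma relX: "rel u v \<Longrightarrow> c \<in> set u \<Longrightarrow> \<not> isl c \<Longrightarrow> c \<in> set v"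
  unfolding rel_def by blast
lemma relF: "rel u v \<Longrightarrow> filter (\<lambda>c. c \<in> set v) u = filter (\<lambda>c. c \<in> set u) v"
  unfolding rel_def by blast

lemma rel_refl: "rel u u"
  unfolding rel_def by auto

lemma rel_trans: assumes "rel u v" "rel v w" shows "rel u w"
proof -
  have com: "c \<in> set v" if "c \<in> set u" "c \<in> set w" for c
    using assms that relA relX by (cases "isl c") blast+
  have "filter (\<lambda>c. c \<in> set w) u = filter (\<lambda>c. c \<in> set w) (filter (\<lambda>c. c \<in> set v) u)"
    unfolding filter_filter by (rule filter_cong) (auto intro: com)
  also have "\<dots> = filter (\<lambda>c. c \<in> set w) (filter (\<lambda>c. c \<in> set u) v)"
    using assms(1) unfolding rel_def by simp
  also have "\<dots> = filter (\<lambda>c. c \<in> set u) (filter (\<lambda>c. c \<in> set w) v)"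
    unfolding filter_filter by (rule filter_cong) auto
  also have "\<dots> = filter (\<lambda>c. c \<in> set u) (filter (\<lambda>c. c \<in> set v) w)"
    using assms(2) unfolding rel_def by simp
  also have "\<dots> = filter (\<lambda>c. c \<in> set u) w"
    unfolding filter_filter by (rule filter_cong) (auto intro: com)
  finally have f: "filter (\<lambda>c. c \<in> set w) u = filter (\<lambda>c. c \<in> set u) w" .
  have s1: "\<forall>c\<in>set w. isl c \<longrightarrow> c \<in> set u" using assms unfolding rel_def by blast
  have s2: "\<forall>c\<in>set u. \<not> isl c \<longrightarrow> c \<in> set w" using assms unfolding rel_def by blast
  show ?thesis unfolding rel_def using f s1 s2 by blast
qed

lemma alphA_isl: "c \<in> alphA M \<Longrightarrow> isl c"
  unfolding alphA_def by auto
lemma alphX_isl: "c \<in> alphX N \<Longrightarrow> \<not> isl c"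
  unfolding alphX_def by auto

lemma covered_rel: assumes "covered_by M N u v" shows "rel u v"
proof -
  from assms have du: "distinct u" and dv: "distinct v"
    unfolding covered_by_def W_def shuffle_word_def by auto
  from assms consider
    (del) xs ys c where "c \<in> alphA M" "u = xs @ [c] @ ys" "v = xs @ ys"
  | (ins) xs ys c where "c \<in> alphX N" "u = xs @ ys" "v = xs @ [c] @ ys"
    unfolding covered_by_def by blast
  then show ?thesis
  proof cases
    case del
    have f1: "filter (\<lambda>x. x \<in> set v) u = v"
      using du unfolding del by (simp add: filter_True)
    have f2: "filter (\<lambda>x. x \<in> set u) v = v"
      unfolding del by (rule filter_True) simp
    note f = f1 f2
    with del f show ?thesis unfolding rel_def by (auto dest: alphA_isl)
  next
    case ins
    have f1: "filter (\<lambda>x. x \<in> set v) u = u"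
      unfolding ins by (rule filter_True) simp
    have f2: "filter (\<lambda>x. x \<in> set u) v = u"
      using dv unfolding ins by (simp add: filter_True)
    note f = f1 f2
    with ins f show ?thesis unfolding rel_def by (auto dest: alphX_isl)
  qed
qed

lemma le_rel: assumes "shuffle_le M N u w" shows "rel u w"
proof -
  from assms have "(covered_by M N)\<^sup>*\<^sup>* u w" unfolding shuffle_le_def by auto
  then show ?thesis
    by (induction rule: rtranclp_induct) (auto intro: rel_refl rel_trans covered_rel)
qed

lemma W_distinct: "w \<in> W M N \<Longrightarrow> distinct w"
  unfolding W_def shuffle_word_def by auto

lemma W_set: "w \<in> W M N \<Longrightarrow> set w \<subseteq> alphA M \<union> alphX N"
  unfolding W_def shuffle_word_def by auto

lemma rel_le_aux:
  "\<forall>u. u \<in> W M N \<longrightarrow> rel u w \<longrightarrow> n = card (set u - set w) + card (set w - set u)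
     \<longrightarrow> (covered_by M N)\<^sup>*\<^sup>* u w" if w: "w \<in> W M N"
proof (induction n rule: less_induct)
  case (less n)
  show ?case
  proof (intro allI impI)
    fix u assume u: "u \<in> W M N" and r: "rel u w" and n: "n = card (set u - set w) + card (set w - set u)"
    show "(covered_by M N)\<^sup>*\<^sup>* u w"
    proof (cases "set u \<subseteq> set w")
      case False
      then obtain a where a: "a \<in> set u" "a \<notin> set w" by auto
      have ia: "isl a" using relX[OF r a(1)] a(2) by blast
      have aA: "a \<in> alphA M" using W_set[OF u] a(1) alphX_isl[of a N] ia by blast
      from a obtain xs ys where uxy: "u = xs @ a # ys" by (meson split_list)
      define u' where "u' = xs @ ys"
      have du: "distinct u" using u W_distinct by blast
      have fx: "filter (\<lambda>c. c \<noteq> a) xs = xs" "filter (\<lambda>c. c \<noteq> a) ys = ys"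
        using du unfolding uxy by (auto intro!: filter_True)
      have u'f: "u' = filter (\<lambda>c. c \<noteq> a) u"
        unfolding u'_def uxy using fx by simp
      have u'W: "u' \<in> W M N" unfolding u'f using u by (rule W_filter)
      have "\<exists>xs ys c. c \<in> alphA M \<and> u = xs @ [c] @ ys \<and> u' = xs @ ys"
        by (rule exI[of _ xs], rule exI[of _ ys], rule exI[of _ a]) (simp add: aA uxy u'_def)
      hence cov: "covered_by M N u u'"
        unfolding covered_by_def using u u'W by blast
      have su': "set u' = set u - {a}" unfolding u'f by auto
      have "filter (\<lambda>c. c \<in> set w) u' = filter (\<lambda>c. c \<in> set w) u"
        unfolding u'f by (simp add: filter_filter) (metis a(2))
      also have "\<dots> = filter (\<lambda>c. c \<in> set u) w" using relF[OF r] .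
      also have "\<dots> = filter (\<lambda>c. c \<in> set u') w"
        using a(2) su' by (intro filter_cong) auto
      finally have "filter (\<lambda>c. c \<in> set w) u' = filter (\<lambda>c. c \<in> set u') w" .
      moreover have "\<forall>c\<in>set w. isl c \<longrightarrow> c \<in> set u'" using relA[OF r] su' a by blast
      moreover have "\<forall>c\<in>set u'. \<not> isl c \<longrightarrow> c \<in> set w" using relX[OF r] su' by blast
      ultimately have r': "rel u' w" unfolding rel_def by blast
      have "card (set u' - set w) < card (set u - set w)"
        using a su' by (intro psubset_card_mono) auto
      moreover have "set w - set u' = set w - set u" using su' a by auto
      ultimately have "card (set u' - set w) + card (set w - set u') < n" using n by simp
      with less.IH u'W r' have "(covered_by M N)\<^sup>*\<^sup>* u' w" by blast
      with cov show ?thesis by (rule converse_rtranclp_into_rtranclp)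
    next
      case True
      have uf: "u = filter (\<lambda>c. c \<in> set u) w"
        using relF[OF r] True by (metis filter_True subsetD)
      show ?thesis
      proof (cases "set w \<subseteq> set u")
        case True
        then have "u = w" using uf by (metis filter_True subsetD)
        then show ?thesis by simp
      next
        case False
        then obtain x where x: "x \<in> set w" "x \<notin> set u" by auto
        have ix: "\<not> isl x" using relA[OF r x(1)] x(2) by blast
        have xX: "x \<in> alphX N" using W_set[OF w] x(1) alphA_isl[of x M] ix by blast
        from x obtain w1 w2 where wxy: "w = w1 @ x # w2" by (meson split_list)
        have dw: "distinct w" using w W_distinct by blast
        define P where "P = (\<lambda>c. c \<in> set u \<or> c = x)"
        define u' where "u' = filter P w"
        have u'W: "u' \<in> W M N" unfolding u'_def using w by (rule W_filter)
        have e1: "filter P w1 = filter (\<lambda>c. c \<in> set u) w1"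
          using dw unfolding wxy P_def by (intro filter_cong) auto
        have e2: "filter P w2 = filter (\<lambda>c. c \<in> set u) w2"
          using dw unfolding wxy P_def by (intro filter_cong) auto
        have uu: "u = filter (\<lambda>c. c \<in> set u) w1 @ filter (\<lambda>c. c \<in> set u) w2"
          using uf x(2) unfolding wxy by simp
        have uu': "u' = filter (\<lambda>c. c \<in> set u) w1 @ [x] @ filter (\<lambda>c. c \<in> set u) w2"
          unfolding u'_def wxy by (simp add: e1[symmetric] e2[symmetric]) (simp add: P_def)
        have "\<exists>xs ys c. c \<in> alphX N \<and> u = xs @ ys \<and> u' = xs @ [c] @ ys"
          by (rule exI, rule exI, rule exI[of _ x]) (rule conjI[OF xX], rule conjI[OF uu uu'])
        hence cov: "covered_by M N u u'"
          unfolding covered_by_def using u u'W by blast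
        have su': "set u' = set u \<union> {x}" unfolding u'_def P_def using True x by auto
        have r': "rel u' w"
          unfolding rel_def
        proof (intro conjI)
          show "\<forall>c\<in>set w. isl c \<longrightarrow> c \<in> set u'" using relA[OF r] su' by blast
          show "\<forall>c\<in>set u'. \<not> isl c \<longrightarrow> c \<in> set w" using True su' x by auto
          have "filter (\<lambda>c. c \<in> set w) u' = u'"
            using su' True x by (intro filter_True) auto
          also have "\<dots> = filter (\<lambda>c. c \<in> set u') w"
            unfolding u'_def by (intro filter_cong) auto
          finally show "filter (\<lambda>c. c \<in> set w) u' = filter (\<lambda>c. c \<in> set u') w" .
        qed
        have "set u' - set w = set u - set w" using su' x by auto
        moreover have "card (set w - set u') < card (set w - set u)"
          using x su' by (intro psubset_card_mono) auto
        ultimately have "card (set u' - set w) + card (set w - set u') < n" using n by simp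
        with less.IH u'W r' have "(covered_by M N)\<^sup>*\<^sup>* u' w" by blast
        with cov show ?thesis by (rule converse_rtranclp_into_rtranclp)
      qed
    qed
  qed
qed

lemma le_iff: "shuffle_le M N u w \<longleftrightarrow> u \<in> W M N \<and> w \<in> W M N \<and> rel u w"
proof
  assume "shuffle_le M N u w" thus "u \<in> W M N \<and> w \<in> W M N \<and> rel u w"
    using le_rel unfolding shuffle_le_def by blast
next
  assume h: "u \<in> W M N \<and> w \<in> W M N \<and> rel u w"
  hence "(covered_by M N)\<^sup>*\<^sup>* u w"
    using rel_le_aux[of w M N "card (set u - set w) + card (set w - set u)"] by blast
  with h show "shuffle_le M N u w" unfolding shuffle_le_def by blast
qed

definition J :: "'a list \<Rightarrow> 'a list \<Rightarrow> 'a list set" where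
  "J u w = {v. distinct v \<and> set v \<subseteq> set u \<union> set w \<and> set u \<inter> set w \<subseteq> set v
     \<and> filter (\<lambda>c. c \<in> set v) u = filter (\<lambda>c. c \<in> set u) v
     \<and> filter (\<lambda>c. c \<in> set v) w = filter (\<lambda>c. c \<in> set w) v}"

definition lvl :: "'a list \<Rightarrow> 'a list \<Rightarrow> nat" where
  "lvl u v = card (set u - set v) + card (set v - set u)"

lemma finite_J: "finite (J u w)"
  by (rule finite_subset[OF _ finite_subset_distinct[of "set u \<union> set w"]]) (auto simp: J_def)

lemma subs_eq:
  assumes "\<forall>c\<in>set v. isl c \<longrightarrow> P c"
  shows "A_subscripts v = A_subscripts (filter P v)"
proof -
  have "filter isl (filter P v) = filter isl v"
    unfolding filter_filter using assms by (intro filter_cong) auto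
  thus ?thesis unfolding A_subscripts_def by simp
qed

lemma subs_eqX:
  assumes "\<forall>c\<in>set v. \<not> isl c \<longrightarrow> P c"
  shows "X_subscripts v = X_subscripts (filter P v)"
proof -
  have "filter (\<lambda>c. \<not> isl c) (filter P v) = filter (\<lambda>c. \<not> isl c) v"
    unfolding filter_filter using assms by (intro filter_cong) auto
  thus ?thesis unfolding X_subscripts_def by simp
qed

lemma interval_J:
  assumes u: "u \<in> W M N" and w: "w \<in> W M N" and r: "rel u w"
  shows "shuffle_interval M N u w = J u w"
proof
  show "shuffle_interval M N u w \<subseteq> J u w"
  proof
    fix v assume "v \<in> shuffle_interval M N u w"
    hence v: "v \<in> W M N" and r1: "rel u v" and r2: "rel v w"
      unfolding shuffle_interval_def le_iff by auto
    have "distinct v" using v W_distinct by blast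
    moreover have "set v \<subseteq> set u \<union> set w"
    proof
      fix c assume c: "c \<in> set v"
      show "c \<in> set u \<union> set w"
        using relA[OF r1 c] relX[OF r2 c] by (cases "isl c") auto
    qed
    moreover have "set u \<inter> set w \<subseteq> set v"
    proof
      fix c assume c: "c \<in> set u \<inter> set w"
      show "c \<in> set v"
        using relA[OF r2 _] relX[OF r1 _] c by (cases "isl c") auto
    qed
    moreover note relF[OF r1] relF[OF r2]
    ultimately show "v \<in> J u w" unfolding J_def by auto
  qed
next
  show "J u w \<subseteq> shuffle_interval M N u w"
  proof
    fix v assume "v \<in> J u w"
    hence dv: "distinct v" and sv: "set v \<subseteq> set u \<union> set w" and cv: "set u \<inter> set w \<subseteq> set v"
      and f1: "filter (\<lambda>c. c \<in> set v) u = filter (\<lambda>c. c \<in> set u) v"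
      and f2: "filter (\<lambda>c. c \<in> set v) w = filter (\<lambda>c. c \<in> set w) v"
      unfolding J_def by auto
    have vA: "c \<in> set u" if "c \<in> set v" "isl c" for c
      using sv that relA[OF r, of c] by auto
    have vX: "c \<in> set w" if "c \<in> set v" "\<not> isl c" for c
      using sv that relX[OF r, of c] by auto
    have sw: "shuffle_word M N v"
      unfolding shuffle_word_def
    proof (intro conjI)
      show "distinct v" by fact
      show "set v \<subseteq> alphA M \<union> alphX N" using sv W_set[OF u] W_set[OF w] by blast
      have "A_subscripts v = A_subscripts (filter (\<lambda>c. c \<in> set u) v)"
        by (rule subs_eq) (auto intro: vA)
      also have "\<dots> = A_subscripts (filter (\<lambda>c. c \<in> set v) u)" by (simp only: f1)
      finally show "sorted_wrt (<) (A_subscripts v)"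
        using W_filter[OF u, of "\<lambda>c. c \<in> set v"] unfolding W_def shuffle_word_def by simp
      have "X_subscripts v = X_subscripts (filter (\<lambda>c. c \<in> set w) v)"
        by (rule subs_eqX) (auto intro: vX)
      also have "\<dots> = X_subscripts (filter (\<lambda>c. c \<in> set v) w)" by (simp only: f2)
      finally show "sorted_wrt (<) (X_subscripts v)"
        using W_filter[OF w, of "\<lambda>c. c \<in> set v"] unfolding W_def shuffle_word_def by simp
    qed
    hence vW: "v \<in> W M N" unfolding W_def by simp
    have r1: "rel u v" unfolding rel_def
    proof (intro conjI)
      show "\<forall>c\<in>set v. isl c \<longrightarrow> c \<in> set u" using vA by blast
      show "\<forall>c\<in>set u. \<not> isl c \<longrightarrow> c \<in> set v" using relX[OF r] cv by blast
      show "filter (\<lambda>c. c \<in> set v) u = filter (\<lambda>c. c \<in> set u) v" by fact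
    qed
    have r2: "rel v w" unfolding rel_def
    proof (intro conjI)
      show "\<forall>c\<in>set w. isl c \<longrightarrow> c \<in> set v" using relA[OF r] cv by blast
      show "\<forall>c\<in>set v. \<not> isl c \<longrightarrow> c \<in> set w" using vX by blast
      show "filter (\<lambda>c. c \<in> set w) v = filter (\<lambda>c. c \<in> set v) w" using f2 by simp
    qed
    show "v \<in> shuffle_interval M N u w"
      unfolding shuffle_interval_def le_iff using u w vW r1 r2 by blast
  qed
qed

lemma card_alphA: "card (alphA M) = M"
  unfolding alphA_def by (simp add: card_image)

lemma rho_lvl:
  assumes u: "u \<in> W M N" and v: "v \<in> W M N" and r: "rel u v"
  shows "rho M N v = rho M N u + lvl u v"
proof -
  have alph: "alphA M \<inter> alphX N = {}" unfolding alphA_def alphX_def by auto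
  have d1: "set u - set v \<subseteq> alphA M"
  proof
    fix c assume c: "c \<in> set u - set v"
    hence "isl c" using relX[OF r, of c] by auto
    thus "c \<in> alphA M" using c W_set[OF u] alphX_isl by blast
  qed
  have d2: "set v - set u \<subseteq> alphX N"
  proof
    fix c assume c: "c \<in> set v - set u"
    hence "\<not> isl c" using relA[OF r, of c] by auto
    thus "c \<in> alphX N" using c W_set[OF v] alphA_isl by blast
  qed
  define UA where "UA = set u \<inter> alphA M"
  define VA where "VA = set v \<inter> alphA M"
  define UX where "UX = set u \<inter> alphX N"
  define VX where "VX = set v \<inter> alphX N"
  have "VA \<subseteq> UA" unfolding VA_def UA_def using relA[OF r] alphA_isl by blast
  moreover have "UA - VA = set u - set v" unfolding VA_def UA_def using d1 by blast
  moreover have "finite UA" "finite VA" unfolding UA_def VA_def by auto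
  ultimately have cA: "card UA = card VA + card (set u - set v)"
    using card_Diff_subset[of VA UA] card_mono[of UA VA] by simp
  have "UX \<subseteq> VX" unfolding VX_def UX_def using relX[OF r] alphX_isl by blast
  moreover have "VX - UX = set v - set u" unfolding VX_def UX_def using d2 by blast
  moreover have "finite UX" "finite VX" unfolding UX_def VX_def by auto
  ultimately have cX: "card VX = card UX + card (set v - set u)"
    using card_Diff_subset[of UX VX] card_mono[of VX UX] by simp
  have "card UA \<le> M" unfolding UA_def
    using card_mono[of "alphA M" "set u \<inter> alphA M"] card_alphA[of M] by (simp add: alphA_def)
  thus ?thesis unfolding rho_def lvl_def UA_def[symmetric] VA_def[symmetric]
      UX_def[symmetric] VX_def[symmetric] using cA cX by simp
qed

definition pal :: "(nat \<Rightarrow> nat) \<Rightarrow> nat \<Rightarrow> bool" where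
  "pal f D \<longleftrightarrow> (\<forall>i. f i = (if i \<le> D then f (D - i) else 0))"

definition conv :: "(nat \<Rightarrow> nat) \<Rightarrow> (nat \<Rightarrow> nat) \<Rightarrow> nat \<Rightarrow> nat" where
  "conv f g i = (\<Sum>j\<le>i. f j * g (i - j))"

lemma pal_zero: "pal f D \<Longrightarrow> D < i \<Longrightarrow> f i = 0"
  unfolding pal_def by (metis not_le)

lemma pal_at: "pal f D \<Longrightarrow> i \<le> D \<Longrightarrow> f i = f (D - i)"
  unfolding pal_def by metis

lemma conv_alt:
  assumes f: "pal f D1"
  shows "conv f g i = (\<Sum>j\<le>D1. if j \<le> i then f j * g (i - j) else 0)"
proof -
  have "conv f g i = (\<Sum>j\<le>max i D1. if j \<le> i then f j * g (i - j) else 0)"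
    unfolding conv_def
    by (rule sum.mono_neutral_cong_left) auto
  also have "\<dots> = (\<Sum>j\<le>D1. if j \<le> i then f j * g (i - j) else 0)"
    by (rule sum.mono_neutral_cong_right) (auto simp: pal_zero[OF f])
  finally show ?thesis .
qed

lemma conv_pal:
  assumes f: "pal f D1" and g: "pal g D2"
  shows "pal (conv f g) (D1 + D2)"
  unfolding pal_def
proof (intro allI)
  fix i
  show "conv f g i = (if i \<le> D1 + D2 then conv f g (D1 + D2 - i) else 0)"
  proof (cases "i \<le> D1 + D2")
    case False
    have "conv f g i = 0" unfolding conv_def
    proof (rule sum.neutral, intro ballI)
      fix j assume "j \<in> {..i}"
      show "f j * g (i - j) = 0"
      proof (cases "j \<le> D1")
        case True
        hence "D2 < i - j" using False by arith
        thus ?thesis using pal_zero[OF g] by simp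
      next
        case False
        thus ?thesis using pal_zero[OF f] by simp
      qed
    qed
    with False show ?thesis by simp
  next
    case iD: True
    have "conv f g (D1 + D2 - i) = (\<Sum>j\<le>D1. if j \<le> D1 + D2 - i then f j * g (D1 + D2 - i - j) else 0)"
      by (rule conv_alt[OF f])
    also have "\<dots> = (\<Sum>j\<le>D1. if D1 - j \<le> D1 + D2 - i then f (D1 - j) * g (D1 + D2 - i - (D1 - j)) else 0)"
      by (rule sum.reindex_bij_witness[of _ "\<lambda>j. D1 - j" "\<lambda>j. D1 - j"]) auto
    also have "\<dots> = (\<Sum>j\<le>D1. if j \<le> i then f j * g (i - j) else 0)"
    proof (rule sum.cong[OF refl])
      fix j assume j: "j \<in> {..D1}"
      hence "j \<le> D1" by simp
      hence fj: "f (D1 - j) = f j" using pal_at[OF f, of j] by (simp only:)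
      show "(if D1 - j \<le> D1 + D2 - i then f (D1 - j) * g (D1 + D2 - i - (D1 - j)) else 0) =
            (if j \<le> i then f j * g (i - j) else 0)"
      proof (cases "j \<le> i")
        case ji: True
        show ?thesis
        proof (cases "i - j \<le> D2")
          case True
          hence "g (i - j) = g (D2 - (i - j))" by (rule pal_at[OF g])
          moreover have "D2 - (i - j) = D1 + D2 - i - (D1 - j)" using True ji \<open>j \<le> D1\<close> by arith
          moreover have "D1 - j \<le> D1 + D2 - i" using True ji \<open>j \<le> D1\<close> by arith
          ultimately show ?thesis using ji fj by simp
        next
          case False
          hence "g (i - j) = 0" using pal_zero[OF g] by simp
          moreover have "\<not> D1 - j \<le> D1 + D2 - i" using False ji iD \<open>j \<le> D1\<close> by arith
          ultimately show ?thesis using ji by simp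
        qed
      next
        case False
        have "D1 - j \<le> D1 + D2 - i" using False \<open>j \<le> D1\<close> iD by arith
        moreover have "D2 < D1 + D2 - i - (D1 - j)" using False \<open>j \<le> D1\<close> iD by arith
        hence "g (D1 + D2 - i - (D1 - j)) = 0" by (rule pal_zero[OF g])
        ultimately show ?thesis using False by simp
      qed
    qed
    also have "\<dots> = conv f g i" by (rule conv_alt[OF f, symmetric])
    finally show ?thesis using iD by simp
  qed
qed

lemma V2: "(\<Sum>p\<le>a. \<Sum>q\<le>b. if p + q = r then (a choose p) * (b choose q) else 0) = (a + b) choose r"
proof -
  have inner: "(\<Sum>q\<le>b. if p + q = r then (a choose p) * (b choose q) else 0)
      = (if p \<le> r then (a choose p) * (b choose (r - p)) else 0)" for p
  proof (cases "p \<le> r")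
    case True
    have "(\<Sum>q\<le>b. if p + q = r then (a choose p) * (b choose q) else 0)
        = (\<Sum>q\<le>b. if q = r - p then (a choose p) * (b choose q) else 0)"
      using True by (intro sum.cong) auto
    also have "\<dots> = (if r - p \<in> {..b} then (a choose p) * (b choose (r - p)) else 0)"
      by (rule sum.delta) simp
    also have "\<dots> = (a choose p) * (b choose (r - p))" by auto
    finally show ?thesis using True by simp
  next
    case False
    hence "(\<Sum>q\<le>b. if p + q = r then (a choose p) * (b choose q) else 0) = 0"
      by (intro sum.neutral) auto
    thus ?thesis using False by simp
  qed
  have "(\<Sum>p\<le>a. \<Sum>q\<le>b. if p + q = r then (a choose p) * (b choose q) else 0)
      = (\<Sum>p\<le>a. if p \<le> r then (a choose p) * (b choose (r - p)) else 0)"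
    by (simp only: inner)
  also have "\<dots> = (\<Sum>p\<le>max a r. if p \<le> r then (a choose p) * (b choose (r - p)) else 0)"
    by (rule sum.mono_neutral_left) auto
  also have "\<dots> = (\<Sum>p\<le>r. (a choose p) * (b choose (r - p)))"
    by (rule sum.mono_neutral_cong_right) auto
  also have "\<dots> = (a + b) choose r" by (rule vandermonde)
  finally show ?thesis .
qed

lemma choose_split: "(k + l) choose k = (\<Sum>j\<le>k. (k choose j) * (l choose j))"
proof -
  have "(l + k) choose k = (\<Sum>j\<le>k. (l choose j) * (k choose (k - j)))"
    by (rule vandermonde[symmetric])
  also have "\<dots> = (\<Sum>j\<le>k. (k choose j) * (l choose j))"
    by (intro sum.cong refl) (metis atMost_iff binomial_symmetric mult.commute)
  finally show ?thesis by (simp add: add.commute)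
qed

lemma prod_id: "(m choose k) * (k choose j) = (if j \<le> k then (m choose j) * ((m - j) choose (k - j)) else 0)"
proof (cases "j \<le> k")
  case True
  show ?thesis
  proof (cases "k \<le> m")
    case True
    with \<open>j \<le> k\<close> show ?thesis using choose_mult[of j k m] by simp
  next
    case False
    hence "m choose k = 0" by simp
    moreover have "(m choose j) * ((m - j) choose (k - j)) = 0"
    proof (cases "j \<le> m")
      case True thus ?thesis using False \<open>j \<le> k\<close> by simp
    next
      case False thus ?thesis by simp
    qed
    ultimately show ?thesis using \<open>j \<le> k\<close> by (metis (no_types) mult_zero_left)
  qed
next
  case False thus ?thesis by simp
qed

definition G :: "nat \<Rightarrow> nat \<Rightarrow> nat \<Rightarrow> nat" where
  "G m n i = (\<Sum>k\<le>m. \<Sum>l\<le>n. if m - k + l = i then (m choose k) * (n choose l) * ((k + l) choose k) else 0)"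

definition H :: "nat \<Rightarrow> nat \<Rightarrow> nat \<Rightarrow> nat" where
  "H m n i = (\<Sum>j\<le>m. (m choose j) * (n choose j) * (if j \<le> i then (m + n - 2 * j) choose (i - j) else 0))"

lemma shift_sum:
  assumes "j \<le> (m::nat)"
  shows "(\<Sum>k\<le>m. if j \<le> k then F (k - j) else 0) = (\<Sum>p\<le>m - j. (F p :: nat))"
proof -
  have eq: "{k\<in>{..m}. j \<le> k} = {j..m}" by auto
  have "(\<Sum>k\<le>m. if j \<le> k then F (k - j) else 0) = (\<Sum>k\<in>{k\<in>{..m}. j \<le> k}. F (k - j))"
    by (rule sum.inter_filter[symmetric]) simp
  also have "\<dots> = (\<Sum>k\<in>{j..m}. F (k - j))" by (simp only: eq)
  also have "\<dots> = (\<Sum>p\<le>m - j. F p)"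
    using assms by (intro sum.reindex_bij_witness[of _ "\<lambda>p. p + j" "\<lambda>k. k - j"]) auto
  finally show ?thesis .
qed

lemma inner_eval:
  assumes jm: "j \<le> m" and jn: "j \<le> (n::nat)"
  shows "(\<Sum>k\<le>m. \<Sum>l\<le>n. if m - k + l = i \<and> j \<le> k \<and> j \<le> l
            then ((m - j) choose (k - j)) * ((n - j) choose (l - j)) else 0)
         = (if j \<le> i then (m + n - 2 * j) choose (i - j) else 0)"
proof -
  define a where "a = m - j"
  define b where "b = n - j"
  define F' where "F' = (\<lambda>p q. if a - p + q + j = i then (a choose p) * (b choose q) else 0)"
  have "(\<Sum>k\<le>m. \<Sum>l\<le>n. if m - k + l = i \<and> j \<le> k \<and> j \<le> l
            then ((m - j) choose (k - j)) * ((n - j) choose (l - j)) else 0)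
      = (\<Sum>k\<le>m. if j \<le> k then (\<Sum>l\<le>n. if j \<le> l then F' (k - j) (l - j) else 0) else 0)"
  proof (rule sum.cong[OF refl])
    fix k assume k: "k \<in> {..m}"
    show "(\<Sum>l\<le>n. if m - k + l = i \<and> j \<le> k \<and> j \<le> l
            then ((m - j) choose (k - j)) * ((n - j) choose (l - j)) else 0)
        = (if j \<le> k then (\<Sum>l\<le>n. if j \<le> l then F' (k - j) (l - j) else 0) else 0)"
    proof (cases "j \<le> k")
      case True
      have "m - k + l = a - (k - j) + (l - j) + j" if "j \<le> l" for l
        using True that k jm unfolding a_def by auto
      hence "(\<Sum>l\<le>n. if m - k + l = i \<and> j \<le> k \<and> j \<le> l
            then ((m - j) choose (k - j)) * ((n - j) choose (l - j)) else 0)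
          = (\<Sum>l\<le>n. if j \<le> l then F' (k - j) (l - j) else 0)"
        using True unfolding F'_def a_def b_def by (intro sum.cong refl) auto
      thus ?thesis using True by simp
    next
      case False
      thus ?thesis by (intro trans[OF sum.neutral]) auto
    qed
  qed
  also have "\<dots> = (\<Sum>p\<le>a. (\<Sum>l\<le>n. if j \<le> l then F' p (l - j) else 0))"
    unfolding a_def by (rule shift_sum[OF jm])
  also have "\<dots> = (\<Sum>p\<le>a. \<Sum>q\<le>b. F' p q)"
    unfolding b_def by (intro sum.cong refl shift_sum[OF jn])
  also have "\<dots> = (if j \<le> i then (m + n - 2 * j) choose (i - j) else 0)"
  proof (cases "j \<le> i")
    case False
    hence "(\<Sum>p\<le>a. \<Sum>q\<le>b. F' p q) = 0" unfolding F'_def by (intro sum.neutral ballI) auto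
    thus ?thesis using False by simp
  next
    case True
    have "(\<Sum>p\<le>a. \<Sum>q\<le>b. F' p q) = (\<Sum>p\<le>a. \<Sum>q\<le>b. F' (a - p) q)"
      by (rule sum.reindex_bij_witness[of _ "\<lambda>p. a - p" "\<lambda>p. a - p"]) auto
    also have "\<dots> = (\<Sum>p\<le>a. \<Sum>q\<le>b. if p + q = i - j then (a choose p) * (b choose q) else 0)"
    proof (intro sum.cong refl)
      fix p q assume p: "p \<in> {..a}"
      hence "a choose (a - p) = a choose p" by (metis atMost_iff binomial_symmetric)
      moreover have "(a - (a - p) + q + j = i) = (p + q = i - j)" using p True by auto
      ultimately show "F' (a - p) q = (if p + q = i - j then (a choose p) * (b choose q) else 0)"
        unfolding F'_def by simp
    qed
    also have "\<dots> = (a + b) choose (i - j)" by (rule V2)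
    also have "a + b = m + n - 2 * j" unfolding a_def b_def using jm jn by simp
    finally show ?thesis using True by simp
  qed
  finally show ?thesis .
qed

lemma G_eq_H: "G m n i = H m n i"
proof -
  let ?T = "\<lambda>k l j. if m - k + l = i \<and> j \<le> k \<and> j \<le> l
            then ((m - j) choose (k - j)) * ((n - j) choose (l - j)) else 0"
  have step1: "(if m - k + l = i then (m choose k) * (n choose l) * ((k + l) choose k) else 0)
      = (\<Sum>j\<le>m. (m choose j) * (n choose j) * ?T k l j)" if k: "k \<le> m" for k l
  proof -
    have "(k + l) choose k = (\<Sum>j\<le>m. (k choose j) * (l choose j))"
      unfolding choose_split using k by (intro sum.mono_neutral_left) auto
    hence "(m choose k) * (n choose l) * ((k + l) choose k)
        = (\<Sum>j\<le>m. ((m choose k) * (k choose j)) * ((n choose l) * (l choose j)))"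
      by (simp add: sum_distrib_left algebra_simps)
    also have "\<dots> = (\<Sum>j\<le>m. (if j \<le> k then (m choose j) * ((m - j) choose (k - j)) else 0)
                          * (if j \<le> l then (n choose j) * ((n - j) choose (l - j)) else 0))"
      by (simp only: prod_id)
    finally show ?thesis by (auto intro!: sum.cong)
  qed
  have "G m n i = (\<Sum>k\<le>m. \<Sum>l\<le>n. \<Sum>j\<le>m. (m choose j) * (n choose j) * ?T k l j)"
    unfolding G_def by (intro sum.cong refl step1) simp
  also have "\<dots> = (\<Sum>k\<le>m. \<Sum>j\<le>m. \<Sum>l\<le>n. (m choose j) * (n choose j) * ?T k l j)"
    by (intro sum.cong refl sum.swap)
  also have "\<dots> = (\<Sum>j\<le>m. \<Sum>k\<le>m. \<Sum>l\<le>n. (m choose j) * (n choose j) * ?T k l j)"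
    by (rule sum.swap)
  also have "\<dots> = (\<Sum>j\<le>m. (m choose j) * (n choose j) * (\<Sum>k\<le>m. \<Sum>l\<le>n. ?T k l j))"
    by (simp add: sum_distrib_left)
  also have "\<dots> = H m n i"
    unfolding H_def
  proof (intro sum.cong refl)
    fix j assume j: "j \<in> {..m}"
    show "(m choose j) * (n choose j) * (\<Sum>k\<le>m. \<Sum>l\<le>n. ?T k l j)
        = (m choose j) * (n choose j) * (if j \<le> i then (m + n - 2 * j) choose (i - j) else 0)"
    proof (cases "j \<le> n")
      case True
      thus ?thesis using inner_eval[of j m n i] j by simp
    next
      case False thus ?thesis by simp
    qed
  qed
  finally show ?thesis .
qed

lemma H_pal: "pal (H m n) (m + n)"
  unfolding pal_def
proof
  fix i
  show "H m n i = (if i \<le> m + n then H m n (m + n - i) else 0)"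
  proof (cases "i \<le> m + n")
    case False
    have "H m n i = 0" unfolding H_def
    proof (intro sum.neutral ballI)
      fix j assume "j \<in> {..m}"
      show "(m choose j) * (n choose j) * (if j \<le> i then (m + n - 2 * j) choose (i - j) else 0) = 0"
        using False by (cases "j \<le> n") auto
    qed
    thus ?thesis using False by simp
  next
    case True
    have "H m n i = H m n (m + n - i)" unfolding H_def
    proof (intro sum.cong refl)
      fix j assume j: "j \<in> {..m}"
      show "(m choose j) * (n choose j) * (if j \<le> i then (m + n - 2 * j) choose (i - j) else 0)
          = (m choose j) * (n choose j) * (if j \<le> m + n - i then (m + n - 2 * j) choose (m + n - i - j) else 0)"
      proof (cases "j \<le> n")
        case False thus ?thesis by simp
      next
        case jn: True
        consider "j \<le> i" "j \<le> m + n - i" | "\<not> j \<le> i" | "\<not> j \<le> m + n - i" by blast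
        thus ?thesis
        proof cases
          case 1
          have "(m + n - 2 * j) choose (i - j) = (m + n - 2 * j) choose (m + n - 2 * j - (i - j))"
            using 1 True j jn by (intro binomial_symmetric) auto
          moreover have "m + n - 2 * j - (i - j) = m + n - i - j" using 1 True by auto
          ultimately show ?thesis using 1 by simp
        next
          case 2
          hence "m + n - 2 * j < m + n - i - j" using j jn True by auto
          thus ?thesis using 2 by simp
        next
          case 3
          hence "m + n - 2 * j < i - j" using j jn True by auto
          thus ?thesis using 3 by simp
        qed
      qed
    qed
    thus ?thesis using True by simp
  qed
qed

lemma G_pal: "pal (G m n) (m + n)"
proof -
  have "G m n = H m n" by (rule ext) (rule G_eq_H)
  thus ?thesis using H_pal by simp
qed

lemma sum_pow_card:
  assumes "finite A"
  shows "(\<Sum>P\<in>Pow A. g (card P)) = (\<Sum>k\<le>card A. (card A choose k) * (g k :: nat))"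
proof -
  have "(\<Sum>P\<in>Pow A. g (card P)) = (\<Sum>k\<le>card A. \<Sum>P\<in>{P. P \<in> Pow A \<and> card P = k}. g (card P))"
    using assms by (intro sum.group[symmetric]) (auto intro: card_mono)
  also have "\<dots> = (\<Sum>k\<le>card A. (card A choose k) * g k)"
  proof (intro sum.cong refl)
    fix k
    have "(\<Sum>P\<in>{P. P \<in> Pow A \<and> card P = k}. g (card P)) = (\<Sum>P\<in>{P. P \<in> Pow A \<and> card P = k}. g k)"
      by (intro sum.cong) auto
    also have "\<dots> = card {P. P \<subseteq> A \<and> card P = k} * g k" by simp
    also have "\<dots> = (card A choose k) * g k" using n_subsets[OF assms] by simp
    finally show "(\<Sum>P\<in>{P. P \<in> Pow A \<and> card P = k}. g (card P)) = (card A choose k) * g k" .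
  qed
  finally show ?thesis .
qed

lemma set_filter_sub: "P \<subseteq> set xs \<Longrightarrow> set (filter (\<lambda>c. c \<in> P) xs) = P"
  by auto

lemma gap_count:
  assumes da: "distinct al" and dx: "distinct xi" and disj: "set al \<inter> set xi = {}"
  shows "card {v \<in> J al xi. lvl al v = i} = G (length al) (length xi) i"
proof -
  define A where "A = set al"
  define X where "X = set xi"
  define m where "m = length al"
  define n where "n = length xi"
  have cA: "card A = m" unfolding A_def m_def using da by (simp add: distinct_card)
  have cX: "card X = n" unfolding X_def n_def using dx by (simp add: distinct_card)
  define S where "S = (\<lambda>P Q. shuffles (filter (\<lambda>c. c \<in> P) al) (filter (\<lambda>c. c \<in> Q) xi))"
  define I where "I = {p \<in> Pow A \<times> Pow X. card (A - fst p) + card (snd p) = i}"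
  have AX: "A \<inter> X = {}" using disj unfolding A_def X_def .
  have Sprops: "distinct v \<and> set v = P \<union> Q \<and> filter (\<lambda>c. c \<in> P) v = filter (\<lambda>c. c \<in> P) al
      \<and> filter (\<lambda>c. c \<notin> P) v = filter (\<lambda>c. c \<in> Q) xi"
    if "P \<subseteq> A" "Q \<subseteq> X" "v \<in> S P Q" for P Q v
  proof -
    let ?xs = "filter (\<lambda>c. c \<in> P) al" and ?ys = "filter (\<lambda>c. c \<in> Q) xi"
    have sx: "set ?xs = P" using that(1) unfolding A_def by auto
    have sy: "set ?ys = Q" using that(2) unfolding X_def by auto
    have dj: "set ?xs \<inter> set ?ys = {}" using sx sy that AX by auto
    have "distinct v" using distinct_disjoint_shuffles[OF _ _ dj] da dx that(3) unfolding S_def by auto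
    moreover have "set v = P \<union> Q" using set_shuffles that(3) sx sy unfolding S_def by blast
    moreover have "filter (\<lambda>c. c \<in> set ?xs) v = ?xs" "filter (\<lambda>c. c \<notin> set ?xs) v = ?ys"
      using filter_shuffles_disjoint1[OF dj] that(3) unfolding S_def by auto
    ultimately show ?thesis unfolding sx by simp
  qed
  have eq: "{v \<in> J al xi. lvl al v = i} = (\<Union>p\<in>I. S (fst p) (snd p))"
  proof
    show "{v \<in> J al xi. lvl al v = i} \<subseteq> (\<Union>p\<in>I. S (fst p) (snd p))"
    proof
      fix v assume "v \<in> {v \<in> J al xi. lvl al v = i}"
      hence dv: "distinct v" and sv: "set v \<subseteq> A \<union> X"
        and f1: "filter (\<lambda>c. c \<in> set v) al = filter (\<lambda>c. c \<in> A) v"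
        and f2: "filter (\<lambda>c. c \<in> set v) xi = filter (\<lambda>c. c \<in> X) v"
        and l: "lvl al v = i"
        unfolding J_def A_def X_def by auto
      define P where "P = set v \<inter> A"
      define Q where "Q = set v \<inter> X"
      have "v \<in> shuffles (filter (\<lambda>c. c \<in> A) v) (filter (\<lambda>c. \<not> c \<in> A) v)"
        by (rule partition_in_shuffles)
      moreover have "filter (\<lambda>c. c \<in> A) v = filter (\<lambda>c. c \<in> P) al"
      proof -
        have "filter (\<lambda>c. c \<in> A) v = filter (\<lambda>c. c \<in> set v) al" using f1 by simp
        also have "\<dots> = filter (\<lambda>c. c \<in> P) al" unfolding P_def A_def by (intro filter_cong) auto
        finally show ?thesis .
      qed
      moreover have "filter (\<lambda>c. \<not> c \<in> A) v = filter (\<lambda>c. c \<in> X) v"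
        using sv AX by (intro filter_cong) auto
      moreover have "filter (\<lambda>c. c \<in> X) v = filter (\<lambda>c. c \<in> Q) xi"
      proof -
        have "filter (\<lambda>c. c \<in> X) v = filter (\<lambda>c. c \<in> set v) xi" using f2 by simp
        also have "\<dots> = filter (\<lambda>c. c \<in> Q) xi" unfolding Q_def X_def by (intro filter_cong) auto
        finally show ?thesis .
      qed
      ultimately have "v \<in> S P Q" unfolding S_def by simp
      moreover have "(P, Q) \<in> I"
      proof -
        have "A - set v = A - P" unfolding P_def by auto
        moreover have "set v - A = Q" unfolding Q_def using sv AX by auto
        ultimately show ?thesis using l unfolding I_def lvl_def A_def P_def Q_def by auto
      qed
      ultimately show "v \<in> (\<Union>p\<in>I. S (fst p) (snd p))" by force
    qed
  next
    show "(\<Union>p\<in>I. S (fst p) (snd p)) \<subseteq> {v \<in> J al xi. lvl al v = i}"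
    proof
      fix v assume "v \<in> (\<Union>p\<in>I. S (fst p) (snd p))"
      then obtain P Q where PQ: "(P, Q) \<in> I" and v: "v \<in> S P Q" by auto
      from PQ have P: "P \<subseteq> A" and Q: "Q \<subseteq> X" and c: "card (A - P) + card Q = i"
        unfolding I_def by auto
      from Sprops[OF P Q v] have dv: "distinct v" and sv: "set v = P \<union> Q"
        and g1: "filter (\<lambda>c. c \<in> P) v = filter (\<lambda>c. c \<in> P) al"
        and g2: "filter (\<lambda>c. c \<notin> P) v = filter (\<lambda>c. c \<in> Q) xi" by auto
      have "filter (\<lambda>c. c \<in> set v) al = filter (\<lambda>c. c \<in> P) al"
        using sv P Q AX unfolding A_def by (intro filter_cong) auto
      also have "\<dots> = filter (\<lambda>c. c \<in> P) v" using g1 by simp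
      also have "\<dots> = filter (\<lambda>c. c \<in> set al) v"
        using sv P Q AX unfolding A_def by (intro filter_cong) auto
      finally have h1: "filter (\<lambda>c. c \<in> set v) al = filter (\<lambda>c. c \<in> set al) v" .
      have "filter (\<lambda>c. c \<in> set v) xi = filter (\<lambda>c. c \<in> Q) xi"
        using sv P Q AX unfolding X_def by (intro filter_cong) auto
      also have "\<dots> = filter (\<lambda>c. c \<notin> P) v" using g2 by simp
      also have "\<dots> = filter (\<lambda>c. c \<in> set xi) v"
        using sv P Q AX unfolding X_def by (intro filter_cong) auto
      finally have h2: "filter (\<lambda>c. c \<in> set v) xi = filter (\<lambda>c. c \<in> set xi) v" .
      have "v \<in> J al xi" unfolding J_def using dv sv P Q h1 h2 disj unfolding A_def X_def by auto
      moreover have "lvl al v = i"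
      proof -
        have "set al - set v = A - P" unfolding A_def using sv Q AX unfolding A_def by auto
        moreover have "set v - set al = Q" using sv P Q AX unfolding A_def by auto
        ultimately show ?thesis unfolding lvl_def using c by simp
      qed
      ultimately show "v \<in> {v \<in> J al xi. lvl al v = i}" by simp
    qed
  qed
  have finI: "finite I" unfolding I_def A_def X_def
    by (rule finite_subset[of _ "Pow (set al) \<times> Pow (set xi)"]) auto
  have disjS: "\<forall>p\<in>I. \<forall>q\<in>I. p \<noteq> q \<longrightarrow> S (fst p) (snd p) \<inter> S (fst q) (snd q) = {}"
  proof (intro ballI impI)
    fix p q assume p: "p \<in> I" and q: "q \<in> I" and pq: "p \<noteq> q"
    show "S (fst p) (snd p) \<inter> S (fst q) (snd q) = {}"
    proof (rule ccontr)
      assume "S (fst p) (snd p) \<inter> S (fst q) (snd q) \<noteq> {}"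
      then obtain v where v1: "v \<in> S (fst p) (snd p)" and v2: "v \<in> S (fst q) (snd q)" by blast
      from p q have sub: "fst p \<subseteq> A" "snd p \<subseteq> X" "fst q \<subseteq> A" "snd q \<subseteq> X" unfolding I_def by auto
      have e: "fst p \<union> snd p = fst q \<union> snd q"
        using Sprops[OF sub(1,2) v1] Sprops[OF sub(3,4) v2] by simp
      have "fst p = fst q" using e sub AX by blast
      moreover have "snd p = snd q" using e sub AX by blast
      ultimately show False using pq by (simp add: prod_eq_iff)
    qed
  qed
  have "card {v \<in> J al xi. lvl al v = i} = (\<Sum>p\<in>I. card (S (fst p) (snd p)))"
    unfolding eq by (rule card_UN_disjoint[OF finI _ disjS]) (simp add: S_def)
  also have "\<dots> = (\<Sum>p\<in>I. (card (fst p) + card (snd p)) choose card (fst p))"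
  proof (intro sum.cong refl)
    fix p assume p: "p \<in> I"
    hence sub: "fst p \<subseteq> A" "snd p \<subseteq> X" unfolding I_def by auto
    let ?xs = "filter (\<lambda>c. c \<in> fst p) al" and ?ys = "filter (\<lambda>c. c \<in> snd p) xi"
    have sx: "set ?xs = fst p" using sub(1) unfolding A_def by auto
    have sy: "set ?ys = snd p" using sub(2) unfolding X_def by auto
    have lx: "length ?xs = card (fst p)" using sx da by (metis distinct_card distinct_filter)
    have ly: "length ?ys = card (snd p)" using sy dx by (metis distinct_card distinct_filter)
    have "set ?xs \<inter> set ?ys = {}" using sx sy sub AX by auto
    from card_disjoint_shuffles[OF this] show "card (S (fst p) (snd p)) = (card (fst p) + card (snd p)) choose card (fst p)"
      unfolding S_def lx ly .
  qed
  also have "\<dots> = (\<Sum>p\<in>Pow A \<times> Pow X. if card (A - fst p) + card (snd p) = i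
                    then (card (fst p) + card (snd p)) choose card (fst p) else 0)"
    unfolding I_def by (rule sum.inter_filter) (simp add: A_def X_def)
  also have "\<dots> = (\<Sum>P\<in>Pow A. \<Sum>Q\<in>Pow X. if m - card P + card Q = i
                    then (card P + card Q) choose card P else 0)"
    unfolding sum.cartesian_product
  proof (intro sum.cong refl)
    fix p assume "p \<in> Pow A \<times> Pow X"
    hence "fst p \<subseteq> A" by auto
    hence "card (A - fst p) = m - card (fst p)"
      using cA by (simp add: card_Diff_subset A_def finite_subset)
    thus "(if card (A - fst p) + card (snd p) = i then (card (fst p) + card (snd p)) choose card (fst p) else 0)
        = (case p of (P, Q) \<Rightarrow> if m - card P + card Q = i then (card P + card Q) choose card P else 0)"
      by (simp add: split_beta)
  qed
  also have "\<dots> = (\<Sum>k\<le>m. (m choose k) * (\<Sum>l\<le>n. (n choose l) * (if m - k + l = i then (k + l) choose k else 0)))"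
  proof -
    have "(\<Sum>Q\<in>Pow X. if m - card P + card Q = i then (card P + card Q) choose card P else 0)
        = (\<Sum>l\<le>n. (n choose l) * (if m - card P + l = i then (card P + l) choose card P else 0))" for P
      using sum_pow_card[of X "\<lambda>l. if m - card P + l = i then (card P + l) choose card P else 0"] cX
      by (simp add: X_def)
    hence "(\<Sum>P\<in>Pow A. \<Sum>Q\<in>Pow X. if m - card P + card Q = i then (card P + card Q) choose card P else 0)
        = (\<Sum>P\<in>Pow A. (\<lambda>k. \<Sum>l\<le>n. (n choose l) * (if m - k + l = i then (k + l) choose k else 0)) (card P))"
      by (intro sum.cong refl) simp
    also have "\<dots> = (\<Sum>k\<le>m. (m choose k) * (\<Sum>l\<le>n. (n choose l) * (if m - k + l = i then (k + l) choose k else 0)))"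
      using sum_pow_card[of A "\<lambda>k. \<Sum>l\<le>n. (n choose l) * (if m - k + l = i then (k + l) choose k else 0)"]
      unfolding cA by (simp only: A_def finite_set)
    finally show ?thesis .
  qed
  also have "\<dots> = G m n i"
    unfolding G_def by (simp add: sum_distrib_left) (intro sum.cong refl, simp)
  finally show ?thesis unfolding m_def n_def .
qed

locale decomp =
  fixes al u2 xi w2 :: "'a list" and c :: 'a
  assumes du: "distinct (al @ c # u2)" and dw: "distinct (xi @ c # w2)"
    and aw: "set al \<inter> set (xi @ c # w2) = {}" and xu: "set xi \<inter> set (al @ c # u2) = {}"
begin

abbreviation "u \<equiv> al @ c # u2"
abbreviation "w \<equiv> xi @ c # w2"

lemma facts:
  "c \<notin> set al" "c \<notin> set u2" "c \<notin> set xi" "c \<notin> set w2"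
  "set al \<inter> set u2 = {}" "set xi \<inter> set w2 = {}" "set al \<inter> set xi = {}"
  "set al \<inter> set w2 = {}" "set xi \<inter> set u2 = {}"
  "distinct al" "distinct u2" "distinct xi" "distinct w2"
  using du dw aw xu by auto

lemma lvl_add:
  assumes b: "set b \<subseteq> set al \<union> set xi" and v: "set v \<subseteq> set u2 \<union> set w2"
  shows "lvl u (b @ c # v) = lvl al b + lvl u2 v"
proof -
  note f = facts
  have e1: "set u - set (b @ c # v) = (set al - set b) \<union> (set u2 - set v)"
    using b v f by auto
  have e2: "set (b @ c # v) - set u = (set b - set al) \<union> (set v - set u2)"
    using b v f by auto
  have d1: "(set al - set b) \<inter> (set u2 - set v) = {}" using f by auto
  have d2: "(set b - set al) \<inter> (set v - set u2) = {}" using b v f by auto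
  show ?thesis unfolding lvl_def e1 e2
    by (simp add: card_Un_disjoint[OF _ _ d1] card_Un_disjoint[OF _ _ d2])
qed

lemma J_decomp: "J u w = (\<lambda>p. fst p @ c # snd p) ` (J al xi \<times> J u2 w2)"
proof
  note f = facts
  show "J u w \<subseteq> (\<lambda>p. fst p @ c # snd p) ` (J al xi \<times> J u2 w2)"
  proof
    fix v assume vJ: "v \<in> J u w"
    hence dv: "distinct v" and sv: "set v \<subseteq> set u \<union> set w" and cv: "set u \<inter> set w \<subseteq> set v"
      and F1: "filter (\<lambda>y. y \<in> set v) u = filter (\<lambda>y. y \<in> set u) v"
      and F2: "filter (\<lambda>y. y \<in> set v) w = filter (\<lambda>y. y \<in> set w) v"
      unfolding J_def by auto
    have "c \<in> set v" using cv by auto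
    then obtain b v2 where v: "v = b @ c # v2" by (meson split_list)
    from dv v have cb: "c \<notin> set b" and cv2: "c \<notin> set v2" and bv2: "set b \<inter> set v2 = {}"
      and db: "distinct b" and dv2: "distinct v2" by auto
    have "filter (\<lambda>y. y \<in> set v) al @ c # filter (\<lambda>y. y \<in> set v) u2
        = filter (\<lambda>y. y \<in> set u) b @ c # filter (\<lambda>y. y \<in> set u) v2"
      using F1 unfolding v by simp
    hence E1: "filter (\<lambda>y. y \<in> set v) al = filter (\<lambda>y. y \<in> set u) b"
      and E2: "filter (\<lambda>y. y \<in> set v) u2 = filter (\<lambda>y. y \<in> set u) v2"
      using append_Cons_eq_iff[of c "filter (\<lambda>y. y \<in> set v) al" "filter (\<lambda>y. y \<in> set v) u2"]
        f cb by auto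
    have "filter (\<lambda>y. y \<in> set v) xi @ c # filter (\<lambda>y. y \<in> set v) w2
        = filter (\<lambda>y. y \<in> set w) b @ c # filter (\<lambda>y. y \<in> set w) v2"
      using F2 unfolding v by simp
    hence E3: "filter (\<lambda>y. y \<in> set v) xi = filter (\<lambda>y. y \<in> set w) b"
      and E4: "filter (\<lambda>y. y \<in> set v) w2 = filter (\<lambda>y. y \<in> set w) v2"
      using append_Cons_eq_iff[of c "filter (\<lambda>y. y \<in> set v) xi" "filter (\<lambda>y. y \<in> set v) w2"]
        f cb by auto
    have sb: "set b \<subseteq> set al \<union> set xi"
    proof
      fix y assume y: "y \<in> set b"
      hence "y \<in> set u \<or> y \<in> set w" using sv v by auto
      thus "y \<in> set al \<union> set xi"
      proof
        assume "y \<in> set u"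
        hence "y \<in> set (filter (\<lambda>y. y \<in> set u) b)" using y by simp
        hence "y \<in> set (filter (\<lambda>y. y \<in> set v) al)" using E1 by simp
        thus ?thesis by simp
      next
        assume "y \<in> set w"
        hence "y \<in> set (filter (\<lambda>y. y \<in> set w) b)" using y by simp
        hence "y \<in> set (filter (\<lambda>y. y \<in> set v) xi)" using E3 by simp
        thus ?thesis by simp
      qed
    qed
    have sv2: "set v2 \<subseteq> set u2 \<union> set w2"
    proof
      fix y assume y: "y \<in> set v2"
      hence "y \<in> set u \<or> y \<in> set w" using sv v by auto
      thus "y \<in> set u2 \<union> set w2"
      proof
        assume "y \<in> set u"
        hence "y \<in> set (filter (\<lambda>y. y \<in> set u) v2)" using y by simp
        hence "y \<in> set (filter (\<lambda>y. y \<in> set v) u2)" using E2 by simp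
        thus ?thesis by simp
      next
        assume "y \<in> set w"
        hence "y \<in> set (filter (\<lambda>y. y \<in> set w) v2)" using y by simp
        hence "y \<in> set (filter (\<lambda>y. y \<in> set v) w2)" using E4 by simp
        thus ?thesis by simp
      qed
    qed
    have bJ: "b \<in> J al xi"
    proof -
      have "filter (\<lambda>y. y \<in> set b) al = filter (\<lambda>y. y \<in> set v) al"
        using f sv2 unfolding v by (intro filter_cong) auto
      also have "\<dots> = filter (\<lambda>y. y \<in> set u) b" by (rule E1)
      also have "\<dots> = filter (\<lambda>y. y \<in> set al) b"
        using f sb by (intro filter_cong) auto
      finally have g1: "filter (\<lambda>y. y \<in> set b) al = filter (\<lambda>y. y \<in> set al) b" .
      have "filter (\<lambda>y. y \<in> set b) xi = filter (\<lambda>y. y \<in> set v) xi"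
        using f sv2 unfolding v by (intro filter_cong) auto
      also have "\<dots> = filter (\<lambda>y. y \<in> set w) b" by (rule E3)
      also have "\<dots> = filter (\<lambda>y. y \<in> set xi) b"
        using f sb aw by (intro filter_cong) auto
      finally have g2: "filter (\<lambda>y. y \<in> set b) xi = filter (\<lambda>y. y \<in> set xi) b" .
      show ?thesis unfolding J_def using db sb g1 g2 f by auto
    qed
    have v2J: "v2 \<in> J u2 w2"
    proof -
      have com: "set u2 \<inter> set w2 \<subseteq> set v2"
      proof
        fix y assume y: "y \<in> set u2 \<inter> set w2"
        hence "y \<in> set v" using cv by auto
        moreover have "y \<notin> set b" using y sb f by auto
        moreover have "y \<noteq> c" using y f by auto
        ultimately show "y \<in> set v2" unfolding v by auto
      qed
      have "filter (\<lambda>y. y \<in> set v2) u2 = filter (\<lambda>y. y \<in> set v) u2"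
        using f sb unfolding v by (intro filter_cong) auto
      also have "\<dots> = filter (\<lambda>y. y \<in> set u) v2" by (rule E2)
      also have "\<dots> = filter (\<lambda>y. y \<in> set u2) v2"
        using f sv2 cv2 by (intro filter_cong) auto
      finally have g1: "filter (\<lambda>y. y \<in> set v2) u2 = filter (\<lambda>y. y \<in> set u2) v2" .
      have "filter (\<lambda>y. y \<in> set v2) w2 = filter (\<lambda>y. y \<in> set v) w2"
        using f sb unfolding v by (intro filter_cong) auto
      also have "\<dots> = filter (\<lambda>y. y \<in> set w) v2" by (rule E4)
      also have "\<dots> = filter (\<lambda>y. y \<in> set w2) v2"
        using f sv2 cv2 xu by (intro filter_cong) auto
      finally have g2: "filter (\<lambda>y. y \<in> set v2) w2 = filter (\<lambda>y. y \<in> set w2) v2" .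
      show ?thesis unfolding J_def using dv2 sv2 com g1 g2 by auto
    qed
    show "v \<in> (\<lambda>p. fst p @ c # snd p) ` (J al xi \<times> J u2 w2)"
      using bJ v2J v by force
  qed
next
  note f = facts
  show "(\<lambda>p. fst p @ c # snd p) ` (J al xi \<times> J u2 w2) \<subseteq> J u w"
  proof
    fix v assume "v \<in> (\<lambda>p. fst p @ c # snd p) ` (J al xi \<times> J u2 w2)"
    then obtain b v2 where v: "v = b @ c # v2" and bJ: "b \<in> J al xi" and v2J: "v2 \<in> J u2 w2" by auto
    from bJ have db: "distinct b" and sb: "set b \<subseteq> set al \<union> set xi"
      and b1: "filter (\<lambda>y. y \<in> set b) al = filter (\<lambda>y. y \<in> set al) b"
      and b2: "filter (\<lambda>y. y \<in> set b) xi = filter (\<lambda>y. y \<in> set xi) b"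
      unfolding J_def by auto
    from v2J have dv2: "distinct v2" and sv2: "set v2 \<subseteq> set u2 \<union> set w2"
      and cv2: "set u2 \<inter> set w2 \<subseteq> set v2"
      and c1: "filter (\<lambda>y. y \<in> set v2) u2 = filter (\<lambda>y. y \<in> set u2) v2"
      and c2: "filter (\<lambda>y. y \<in> set v2) w2 = filter (\<lambda>y. y \<in> set w2) v2"
      unfolding J_def by auto
    have "set b \<inter> set v2 = {}" using sb sv2 f(5-9) by blast
    hence dv: "distinct v" unfolding v using db dv2 sb sv2 f by auto
    have sv: "set v \<subseteq> set u \<union> set w" unfolding v using sb sv2 by auto
    have cv: "set u \<inter> set w \<subseteq> set v" unfolding v using cv2 f aw xu by auto
    have "filter (\<lambda>y. y \<in> set v) u
        = filter (\<lambda>y. y \<in> set b) al @ c # filter (\<lambda>y. y \<in> set v2) u2"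
    proof -
      have "filter (\<lambda>y. y \<in> set v) al = filter (\<lambda>y. y \<in> set b) al"
        using f sv2 unfolding v by (intro filter_cong) auto
      moreover have "filter (\<lambda>y. y \<in> set v) u2 = filter (\<lambda>y. y \<in> set v2) u2"
        using f sb unfolding v by (intro filter_cong) auto
      ultimately show ?thesis unfolding v by simp
    qed
    also have "\<dots> = filter (\<lambda>y. y \<in> set al) b @ c # filter (\<lambda>y. y \<in> set u2) v2"
      using b1 c1 by simp
    also have "\<dots> = filter (\<lambda>y. y \<in> set u) v"
    proof -
      have "filter (\<lambda>y. y \<in> set u) b = filter (\<lambda>y. y \<in> set al) b"
        using f sb by (intro filter_cong) auto
      moreover have "filter (\<lambda>y. y \<in> set u) v2 = filter (\<lambda>y. y \<in> set u2) v2"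
        using f sv2 by (intro filter_cong) auto
      ultimately show ?thesis unfolding v by simp
    qed
    finally have F1: "filter (\<lambda>y. y \<in> set v) u = filter (\<lambda>y. y \<in> set u) v" .
    have "filter (\<lambda>y. y \<in> set v) w
        = filter (\<lambda>y. y \<in> set b) xi @ c # filter (\<lambda>y. y \<in> set v2) w2"
    proof -
      have "filter (\<lambda>y. y \<in> set v) xi = filter (\<lambda>y. y \<in> set b) xi"
        using f sv2 unfolding v by (intro filter_cong) auto
      moreover have "filter (\<lambda>y. y \<in> set v) w2 = filter (\<lambda>y. y \<in> set v2) w2"
        using f sb unfolding v by (intro filter_cong) auto
      ultimately show ?thesis unfolding v by simp
    qed
    also have "\<dots> = filter (\<lambda>y. y \<in> set xi) b @ c # filter (\<lambda>y. y \<in> set w2) v2"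
      using b2 c2 by simp
    also have "\<dots> = filter (\<lambda>y. y \<in> set w) v"
    proof -
      have "filter (\<lambda>y. y \<in> set w) b = filter (\<lambda>y. y \<in> set xi) b"
        using f sb aw by (intro filter_cong) auto
      moreover have "filter (\<lambda>y. y \<in> set w) v2 = filter (\<lambda>y. y \<in> set w2) v2"
        using f sv2 xu by (intro filter_cong) auto
      ultimately show ?thesis unfolding v by simp
    qed
    finally have F2: "filter (\<lambda>y. y \<in> set v) w = filter (\<lambda>y. y \<in> set w) v" .
    show "v \<in> J u w" unfolding J_def using dv sv cv F1 F2 by auto
  qed
qed

end

definition cnt :: "'a list \<Rightarrow> 'a list \<Rightarrow> nat \<Rightarrow> nat" where
  "cnt u w i = card {v \<in> J u w. lvl u v = i}"

lemma (in decomp) cnt_decomp: "cnt u w i = conv (cnt al xi) (cnt u2 w2) i"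
proof -
  note f = facts
  define g where "g = (\<lambda>p. fst p @ c # (snd p :: 'a list))"
  define Pairs where "Pairs = {p \<in> J al xi \<times> J u2 w2. lvl al (fst p) + lvl u2 (snd p) = i}"
  have lv: "lvl u (g p) = lvl al (fst p) + lvl u2 (snd p)" if "p \<in> J al xi \<times> J u2 w2" for p
    using that unfolding g_def by (intro lvl_add) (auto simp: J_def)
  have eq: "{v \<in> J u w. lvl u v = i} = g ` Pairs"
    unfolding J_decomp g_def[symmetric] Pairs_def using lv by auto
  have inj: "inj_on g Pairs"
  proof
    fix p q assume p: "p \<in> Pairs" and q: "q \<in> Pairs" and e: "g p = g q"
    have "c \<notin> set (fst p)" "c \<notin> set (snd p)" using p f unfolding Pairs_def J_def by auto
    hence "fst p = fst q \<and> snd p = snd q" using e append_Cons_eq_iff[of c "fst p" "snd p" "fst q" "snd q"]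
      unfolding g_def by blast
    thus "p = q" by (simp add: prod_eq_iff)
  qed
  have PU: "Pairs = (\<Union>j\<in>{..i}. {b \<in> J al xi. lvl al b = j} \<times> {v \<in> J u2 w2. lvl u2 v = i - j})"
    unfolding Pairs_def by auto
  have "card Pairs = (\<Sum>j\<le>i. card ({b \<in> J al xi. lvl al b = j} \<times> {v \<in> J u2 w2. lvl u2 v = i - j}))"
    unfolding PU
  proof (rule card_UN_disjoint)
    show "finite {..i}" by simp
    show "\<forall>j\<in>{..i}. finite ({b \<in> J al xi. lvl al b = j} \<times> {v \<in> J u2 w2. lvl u2 v = i - j})"
      using finite_J[of al xi] finite_J[of u2 w2] by auto
    show "\<forall>j\<in>{..i}. \<forall>k\<in>{..i}. j \<noteq> k \<longrightarrow>
      ({b \<in> J al xi. lvl al b = j} \<times> {v \<in> J u2 w2. lvl u2 v = i - j}) \<inter>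
      ({b \<in> J al xi. lvl al b = k} \<times> {v \<in> J u2 w2. lvl u2 v = i - k}) = {}"
      by auto
  qed
  also have "\<dots> = conv (cnt al xi) (cnt u2 w2) i"
    unfolding conv_def cnt_def by (simp add: card_cartesian_product)
  finally show ?thesis unfolding cnt_def eq card_image[OF inj] .
qed

lemma gap_pal:
  assumes da: "distinct al" and dx: "distinct xi" and disj: "set al \<inter> set xi = {}"
  shows "pal (cnt al xi) (lvl al xi)"
proof -
  have "cnt al xi = G (length al) (length xi)"
    using gap_count[OF assms] unfolding cnt_def by (intro ext) simp
  moreover have "lvl al xi = length al + length xi"
  proof -
    have "set al - set xi = set al" "set xi - set al = set xi" using disj by auto
    thus ?thesis unfolding lvl_def using da dx by (simp add: distinct_card)
  qed
  ultimately show ?thesis using G_pal by simp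
qed

lemma main_pal:
  "\<forall>w. distinct u \<longrightarrow> distinct w \<longrightarrow> filter (\<lambda>c. c \<in> set w) u = filter (\<lambda>c. c \<in> set u) w
     \<longrightarrow> pal (cnt u w) (lvl u w)"
proof (induction u rule: length_induct)
  case (1 u)
  show ?case
  proof (intro allI impI)
    fix w :: "'a list"
    assume du: "distinct u" and dw: "distinct w"
      and fc: "filter (\<lambda>c. c \<in> set w) u = filter (\<lambda>c. c \<in> set u) w"
    show "pal (cnt u w) (lvl u w)"
    proof (cases "set u \<inter> set w = {}")
      case True
      thus ?thesis using gap_pal du dw by blast
    next
      case False
      then obtain y where "y \<in> set u" "y \<in> set w" by blast
      hence "filter (\<lambda>c. c \<in> set w) u \<noteq> []" by (simp add: filter_empty_conv) blast
      then obtain c rest where fr: "filter (\<lambda>c. c \<in> set w) u = c # rest"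
        by (cases "filter (\<lambda>c. c \<in> set w) u") auto
      from filter_eq_ConsD[OF fr] obtain al u2 where
        u: "u = al @ c # u2" and al: "\<forall>y\<in>set al. y \<notin> set w" and cw: "c \<in> set w"
        and r1: "rest = filter (\<lambda>c. c \<in> set w) u2" by blast
      from fr fc have fr2: "filter (\<lambda>c. c \<in> set u) w = c # rest" by simp
      from filter_eq_ConsD[OF fr2] obtain xi w2 where
        w: "w = xi @ c # w2" and xi: "\<forall>y\<in>set xi. y \<notin> set u"
        and r2: "rest = filter (\<lambda>c. c \<in> set u) w2" by blast
      interpret decomp al u2 xi w2 c
        by unfold_locales (use du dw al xi u w in auto)
      note f = facts
      have fc2: "filter (\<lambda>c. c \<in> set w2) u2 = filter (\<lambda>c. c \<in> set u2) w2"
      proof -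
        have "filter (\<lambda>c. c \<in> set w2) u2 = filter (\<lambda>c. c \<in> set w) u2"
          using f xi unfolding w u by (intro filter_cong) auto
        also have "\<dots> = filter (\<lambda>c. c \<in> set u) w2" using r1 r2 by simp
        also have "\<dots> = filter (\<lambda>c. c \<in> set u2) w2"
          using f al unfolding w u by (intro filter_cong) auto
        finally show ?thesis .
      qed
      have "length u2 < length u" unfolding u by simp
      with 1 have IH: "pal (cnt u2 w2) (lvl u2 w2)" using f fc2 by blast
      have P1: "pal (cnt al xi) (lvl al xi)" using gap_pal f by blast
      have "cnt u w = conv (cnt al xi) (cnt u2 w2)"
        unfolding u w by (intro ext cnt_decomp)
      moreover have "lvl u w = lvl al xi + lvl u2 w2"
        unfolding u w using f by (intro lvl_add) auto
      ultimately show ?thesis using conv_pal[OF P1 IH] by simp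
    qed
  qed
qed

lemma PAL:
  assumes "distinct u" "distinct w" "filter (\<lambda>c. c \<in> set w) u = filter (\<lambda>c. c \<in> set u) w"
  shows "card {v \<in> J u w. lvl u v = i} =
           (if i \<le> lvl u w then card {v \<in> J u w. lvl u v = lvl u w - i} else 0)"
proof -
  have "pal (cnt u w) (lvl u w)" using main_pal assms by blast
  hence "cnt u w i = (if i \<le> lvl u w then cnt u w (lvl u w - i) else 0)" unfolding pal_def by blast
  thus ?thesis unfolding cnt_def .
qed

theorem corollary3p7:
  fixes M N :: nat and u w :: "letter list" and i :: nat
  assumes "shuffle_less M N u w"
  shows "\<exists>f. bij_betw f
            {v \<in> shuffle_interval M N u w. rho M N v = rho M N u + i}
            {v \<in> shuffle_interval M N u w. int (rho M N v) = int (rho M N w) - int i}"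
proof -
  from assms have le: "shuffle_le M N u w" unfolding shuffle_less_def by simp
  hence u: "u \<in> W M N" and w: "w \<in> W M N" and r: "rel u w" unfolding le_iff by auto
  have I: "shuffle_interval M N u w = J u w" by (rule interval_J[OF u w r])
  have rv: "rho M N v = rho M N u + lvl u v" if "v \<in> J u w" for v
  proof -
    from that have "v \<in> shuffle_interval M N u w" using I by simp
    hence "v \<in> W M N" "rel u v" unfolding shuffle_interval_def le_iff by auto
    thus ?thesis using rho_lvl[OF u] by blast
  qed
  have rw: "rho M N w = rho M N u + lvl u w" using rho_lvl[OF u w r] .
  define D where "D = lvl u w"
  have S1: "{v \<in> shuffle_interval M N u w. rho M N v = rho M N u + i} = {v \<in> J u w. lvl u v = i}"
    using rv I by auto
  have S2: "{v \<in> shuffle_interval M N u w. int (rho M N v) = int (rho M N w) - int i}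
      = {v \<in> J u w. lvl u v + i = D}"
    using rv I rw unfolding D_def by auto
  have du: "distinct u" using u W_distinct by blast
  have dw: "distinct w" using w W_distinct by blast
  have f: "filter (\<lambda>c. c \<in> set w) u = filter (\<lambda>c. c \<in> set u) w" using relF[OF r] .
  have P: "card {v \<in> J u w. lvl u v = i} =
           (if i \<le> D then card {v \<in> J u w. lvl u v = D - i} else 0)"
    using PAL[OF du dw f] unfolding D_def .
  have "card {v \<in> J u w. lvl u v = i} = card {v \<in> J u w. lvl u v + i = D}"
  proof (cases "i \<le> D")
    case True
    hence "{v \<in> J u w. lvl u v + i = D} = {v \<in> J u w. lvl u v = D - i}" by auto
    with P True show ?thesis by simp
  next
    case False
    hence "{v \<in> J u w. lvl u v + i = D} = {}" by auto
    with P False show ?thesis by simp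
  qed
  moreover have "finite {v \<in> J u w. lvl u v = i}" "finite {v \<in> J u w. lvl u v + i = D}"
    using finite_J[of u w] by auto
  ultimately obtain f where "bij_betw f {v \<in> J u w. lvl u v = i} {v \<in> J u w. lvl u v + i = D}"
    using finite_same_card_bij by blast
  thus ?thesis unfolding S1 S2 by blast
qed

end
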